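(* Let $g(x)=\alpha x^{q^k}+\beta x$ with $\alpha\in\mathbb{F}_{q^n}^*$, $\beta\in\mathbb{F}_{q^n}$, $1\le k<n$, let $f(y)=a_dy^{q^d}$ with $a_d\in\mathbb{F}_{q^n}^*$, $0\le d<n$, and let $0\le h<n$. (1) If $d=h$ or $\beta=0$, then $L_g\cap\sigma(L_f)\ne\emptyset$ if and only if $\mathrm{N}_{q^n/q^e}\!\left(\frac{1-\beta a_d}{\alpha a_d}\right)=1$, where $e=\gcd(n,k,d-h)$. (2) If $d\ne h$, $\beta\ne0$ and $k+|d-h|\le n/2$, then $L_g\cap\sigma(L_f)\neq\emptyset$.
   Context: Let $q$ be a prime power, $n\ge2$. For $e\mid n$, $\mathrm{N}_{q^n/q^e}(x)=x^{(q^n-1)/(q^e-1)}$; $\gcd(n,k,0)=\gcd(n,k)$. For $q$-polynomials $g,f$ over $\mathbb{F}_{q^n}$ and an integer $0\le h<n$: $L_g=\{\langle(x,g(x))\rangle_{\mathbb{F}_{q^n}}:x\in\mathbb{F}_{q^n}^*\}$ and $\sigma(L_f)=\{\langle(f(y),y^{q^h})\rangle_{\mathbb{F}_{q^n}}:y\in\mathbb{F}_{q^n}^*\}$ (the image of $L_f=\{\langle(y^{q^h},f(y))\rangle\}$ under $\langle(X_0,X_1)\rangle\mapsto\langle(X_1,X_0)\rangle$). *)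

theory Defs
  imports "HOL-Computational_Algebra.Primes" "HOL-Library.Cardinality"
begin

text \<open>The F_{q^n}-span of a vector of F_{q^n}^2, i.e. a point of PG(1,q^n).\<close>
definition span1 :: "'a::field \<times> 'a \<Rightarrow> ('a \<times> 'a) set" where
  "span1 v = {(c * fst v, c * snd v) | c. True}"

definition Lset :: "('a::field \<Rightarrow> 'a) \<Rightarrow> ('a \<times> 'a) set set" where
  "Lset g = {span1 (x, g x) | x. x \<noteq> 0}"

definition sigmaL :: "nat \<Rightarrow> nat \<Rightarrow> ('a::field \<Rightarrow> 'a) \<Rightarrow> ('a \<times> 'a) set set" where
  "sigmaL q h f = {span1 (f y, y ^ (q ^ h)) | y. y \<noteq> 0}"

definition normq :: "nat \<Rightarrow> nat \<Rightarrow> nat \<Rightarrow> 'a::field \<Rightarrow> 'a" where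
  "normq q n e z = z ^ ((q ^ n - 1) div (q ^ e - 1))"

definition prime_power :: "nat \<Rightarrow> bool" where
  "prime_power q \<longleftrightarrow> (\<exists>p m. prime p \<and> m > 0 \<and> q = p ^ m)"

end

theory Submission
  imports Defs "HOL-Algebra.Multiplicative_Group" Complex_Main
begin

definition tring :: "'a::field ring" where
  "tring = \<lparr>carrier = UNIV, monoid.mult = (\<lambda>x y. x * y), one = 1, ring.zero = 0, add = (\<lambda>x y. x + y)\<rparr>"

lemma tring_field: "field (tring :: 'a::field ring)"
proof -
  have "\<exists>y. x + y = 0" for x :: 'a
    using add.right_inverse by blast
  moreover have "x \<noteq> 0 \<Longrightarrow> \<exists>y. x * y = 1" for x :: 'a
    by (rule exI[of _ "inverse x"]) auto
  ultimately show ?thesis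
    unfolding tring_def using add.right_inverse
    by unfold_locales (auto simp:algebra_simps Units_def)
qed

lemma tring_pow: "x [^]\<^bsub>(tring::'a::field ring)\<^esub> (i::nat) = x ^ i"
  by (induct i) (simp_all add: tring_def nat_pow_def)

lemma fin_field_gen:
  "\<exists>a::'a::{finite,field}. a \<noteq> 0 \<and> (\<forall>z. z \<noteq> 0 \<longrightarrow> (\<exists>i::nat. z = a ^ i))"
proof -
  interpret F: field "tring :: 'a ring" by (rule tring_field)
  have fin: "finite (carrier (tring :: 'a ring))" unfolding tring_def by simp
  obtain a where
    a: "a \<in> carrier (mult_of (tring::'a ring))" 
    and c: "carrier (mult_of (tring::'a ring)) = {a[^]\<^bsub>tring\<^esub> i | i::nat . i \<in> UNIV}"
    using F.finite_field_mult_group_has_gen[OF fin] by (elim bexE) (rule that)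
  have car: "carrier (mult_of (tring::'a ring)) = UNIV - {0}" unfolding carrier_mult_of tring_def by simp
  have pw: "a[^]\<^bsub>tring\<^esub> i = a ^ i" for i :: nat
    by (rule tring_pow)
  show ?thesis
  proof (intro exI[of _ a] conjI allI impI)
    show "a \<noteq> 0" using a car by blast
    fix z :: 'a assume "z \<noteq> 0"
    then have "z \<in> carrier (mult_of (tring::'a ring))" using car by blast
    then obtain i :: nat where "z = a[^]\<^bsub>tring\<^esub> i" unfolding c by blast
    then show "\<exists>i. z = a ^ i" using pw by metis
  qed
qed

definition ep :: "'b::comm_monoid_mult \<Rightarrow> nat \<Rightarrow> int \<Rightarrow> 'b" where
  "ep w M i = w ^ nat (i mod int M)"

lemma pow_mod_M: assumes "(w::'b::comm_monoid_mult) ^ M = 1" shows "w ^ n = w ^ (n mod M)"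
proof -
  have "w ^ n = w ^ (M * (n div M) + n mod M)" by simp
  also have "\<dots> = (w ^ M) ^ (n div M) * w ^ (n mod M)" by (simp only: power_add power_mult)
  finally show ?thesis using assms by simp
qed

lemma ep_nat: assumes "(w::'b::comm_monoid_mult) ^ M = 1" "M > 0" shows "ep w M (int n) = w ^ n"
proof -
  have "nat (int n mod int M) = n mod M" by (simp add: nat_mod_as_int)
  then show ?thesis unfolding ep_def using pow_mod_M[OF assms(1)] by simp
qed

lemma ep_cong: "i mod int M = j mod int M \<Longrightarrow> ep w M i = ep w M j"
  unfolding ep_def by simp

lemma ep_add: assumes "(w::'b::comm_monoid_mult) ^ M = 1" "M > 0"
  shows "ep w M (i + j) = ep w M i * ep w M j"
proof -
  have "ep w M i * ep w M j = w ^ (nat (i mod M) + nat (j mod M))"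
    unfolding ep_def by (simp add: power_add)
  also have "\<dots> = ep w M (int (nat (i mod M) + nat (j mod M)))" by (rule ep_nat[OF assms, symmetric])
  also have "\<dots> = ep w M (i + j)"
  proof (rule ep_cong)
    have "int (nat (i mod M) + nat (j mod M)) = i mod M + j mod M" using assms(2) by simp
    then show "int (nat (i mod int M) + nat (j mod int M)) mod int M = (i + j) mod int M"
      by (simp add: mod_add_eq)
  qed
  finally show ?thesis by simp
qed

lemma ep_zero: "ep w M 0 = 1" unfolding ep_def by simp

lemma ep_M: assumes "(w::'b::comm_monoid_mult) ^ M = 1" "M > 0" shows "ep w M (int M * k) = 1"
  unfolding ep_def by simp

lemma ep_pow: assumes "(w::'b::comm_monoid_mult) ^ M = 1" "M > 0"
  shows "ep w M i ^ n = ep w M (i * int n)"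
proof (induct n)
  case 0 then show ?case by (simp add: ep_zero)
next
  case (Suc n)
  have "ep w M (i * int (Suc n)) = ep w M (i + i * int n)" by (simp add: algebra_simps)
  then show ?case using Suc ep_add[OF assms] by simp
qed

lemma ep_mult_inv: assumes "(w::'b::comm_monoid_mult) ^ M = 1" "M > 0"
  shows "ep w M i * ep w M (- i) = 1"
  using ep_add[OF assms, of i "-i"] ep_zero[of w M] by simp

lemma ep_eq_one_iff_le: assumes "(w::'b::comm_monoid_mult) ^ M = 1" "M > 0"
  shows "int M dvd i \<Longrightarrow> ep w M i = 1"
  unfolding ep_def by simp

locale ffg =
  fixes g :: "'a::{finite,field}"
  assumes g_nz: "g \<noteq> 0" and g_gen: "\<And>z. z \<noteq> 0 \<Longrightarrow> \<exists>i::nat. z = g ^ i"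
begin

definition M :: nat where "M = CARD('a) - 1"

lemma card_ge2: "CARD('a) \<ge> 2"
proof -
  have "card {0::'a, 1} \<le> CARD('a)" by (rule card_mono) auto
  then show ?thesis by simp
qed

lemma M_pos: "M > 0" using card_ge2 unfolding M_def by simp

lemma card_nz: "card (UNIV - {0::'a}) = M"
  unfolding M_def by (simp add: card_Diff_subset)

lemma pow_M: assumes "(z::'a) \<noteq> 0" shows "z ^ M = 1"
proof -
  let ?S = "UNIV - {0::'a}"
  have bij: "bij_betw (\<lambda>x. z * x) ?S ?S"
    unfolding bij_betw_def inj_on_def
  proof (intro conjI ballI impI)
    show "(*) z ` ?S = ?S"
    proof
      show "(*) z ` ?S \<subseteq> ?S" using assms by auto
      show "?S \<subseteq> (*) z ` ?S"
      proof
        fix y assume "y \<in> ?S"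
        then have "y = z * (y / z)" "y / z \<in> ?S" using assms by auto
        then show "y \<in> (*) z ` ?S" by blast
      qed
    qed
  qed (use assms in auto)
  have "prod (\<lambda>x. z * x) ?S = prod (\<lambda>x. x) ?S"
    by (rule prod.reindex_bij_betw[OF bij])
  moreover have "prod (\<lambda>x. z * x) ?S = z ^ M * prod (\<lambda>x. x) ?S"
    by (simp add: prod.distrib card_nz)
  moreover have "prod (\<lambda>x. x) ?S \<noteq> 0" by simp
  ultimately show ?thesis by simp
qed

definition gp :: "int \<Rightarrow> 'a" where "gp i = ep g M i"

lemma gM: "g ^ M = 1" using pow_M g_nz by simp

lemma gp_add: "gp (i + j) = gp i * gp j"
  unfolding gp_def by (rule ep_add[OF gM M_pos])

lemma gp_zero[simp]: "gp 0 = 1" unfolding gp_def by (rule ep_zero)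

lemma gp_nz[simp]: "gp i \<noteq> 0" unfolding gp_def ep_def using g_nz by simp

lemma gp_nat: "gp (int n) = g ^ n" unfolding gp_def by (rule ep_nat[OF gM M_pos])

lemma gp_surj: "z \<noteq> 0 \<Longrightarrow> \<exists>i. z = gp i"
  using g_gen gp_nat by metis

lemma gp_pow: "gp i ^ n = gp (i * int n)"
  unfolding gp_def by (rule ep_pow[OF gM M_pos])

lemma gp_cong: "i mod int M = j mod int M \<Longrightarrow> gp i = gp j"
  unfolding gp_def by (rule ep_cong)

lemma gp_inverse: "inverse (gp i) = gp (- i)"
proof -
  have "gp i * gp (-i) = 1" using gp_add[of i "-i"] by simp
  then show ?thesis by (simp add: field_simps)
qed

lemma inj_pow: "inj_on (\<lambda>n. g ^ n) {..<M}"
proof (rule eq_card_imp_inj_on)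
  show "finite {..<M}" by simp
  have "(\<lambda>n. g ^ n) ` {..<M} = UNIV - {0}"
  proof
    show "(\<lambda>n. g ^ n) ` {..<M} \<subseteq> UNIV - {0}" using g_nz by auto
    show "UNIV - {0} \<subseteq> (\<lambda>n. g ^ n) ` {..<M}"
    proof
      fix z :: 'a assume "z \<in> UNIV - {0}"
      then obtain i where "z = g ^ i" using g_gen by auto
      then have "z = g ^ (i mod M)" using pow_mod_M[OF gM] by simp
      moreover have "i mod M < M" using M_pos by simp
      ultimately show "z \<in> (\<lambda>n. g ^ n) ` {..<M}" by blast
    qed
  qed
  then show "card ((\<lambda>n. g ^ n) ` {..<M}) = card {..<M}" using card_nz by simp
qed

lemma gp_eq_iff: "gp i = gp j \<longleftrightarrow> i mod int M = j mod int M"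
proof
  assume h: "gp i = gp j"
  have "gp i = g ^ nat (i mod M)" "gp j = g ^ nat (j mod M)" unfolding gp_def ep_def by auto
  moreover have "nat (i mod M) \<in> {..<M}" "nat (j mod M) \<in> {..<M}" using M_pos by (auto simp: nat_less_iff)
  ultimately have "nat (i mod M) = nat (j mod M)" using h inj_pow unfolding inj_on_def by metis
  then show "i mod int M = j mod int M" using M_pos by (simp add: nat_eq_iff2)
qed (rule gp_cong)

lemma gp_one_iff: "gp i = 1 \<longleftrightarrow> int M dvd i"
  using gp_eq_iff[of i 0] gp_zero by (simp add: mod_eq_0_iff_dvd)

end

context ffg begin

definition dl :: "'a \<Rightarrow> int" where "dl z = (SOME i. z = gp i)"

lemma gp_dl: "z \<noteq> 0 \<Longrightarrow> gp (dl z) = z"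
  unfolding dl_def by (metis (mono_tags) gp_surj someI_ex)

lemma dl_gp: "dl (gp i) mod int M = i mod int M"
  using gp_dl[of "gp i"] gp_eq_iff by simp

definition om :: complex where "om = cis (2 * pi / M)"

lemma omM: "om ^ M = 1"
  unfolding om_def DeMoivre using M_pos by simp

lemma om_pow_ne1: assumes "0 < t" "t < M" shows "om ^ t \<noteq> 1"
proof
  assume "om ^ t = 1"
  then have "cis (real t * (2 * pi / M)) = 1" unfolding om_def DeMoivre by simp
  then have "Re (cis (real t * (2 * pi / M))) = Re 1" by simp
  then have "cos (real t * (2 * pi / M)) = 1" by simp
  then obtain n :: int where n: "real t * (2 * pi / M) = of_int n * 2 * pi" using cos_one_2pi_int by blast
  then have "real t = n * M" using M_pos by (simp add: field_simps)
  then have "int t = n * int M" by (metis of_int_eq_iff of_int_mult of_int_of_nat_eq)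
  show False
  proof (cases "n \<le> 0")
    case True
    then have "n * int M \<le> 0" using M_pos by (simp add: mult_nonpos_nonneg)
    then show False using \<open>int t = n * int M\<close> assms by linarith
  next
    case False
    then have "n * int M \<ge> 1 * int M" using M_pos by (intro mult_right_mono) auto
    then show False using \<open>int t = n * int M\<close> assms by linarith
  qed
qed

definition E :: "int \<Rightarrow> complex" where "E a = ep om M a"

lemma E_add: "E (a + b) = E a * E b" unfolding E_def by (rule ep_add[OF omM M_pos])
lemma E_zero[simp]: "E 0 = 1" unfolding E_def by (rule ep_zero)
lemma E_pow: "E a ^ n = E (a * int n)" unfolding E_def by (rule ep_pow[OF omM M_pos])
lemma E_cong: "a mod int M = b mod int M \<Longrightarrow> E a = E b" unfolding E_def by (rule ep_cong)

lemma E_one_iff: "E a = 1 \<longleftrightarrow> int M dvd a"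
proof
  assume h: "E a = 1"
  show "int M dvd a"
  proof (rule ccontr)
    assume nd: "\<not> int M dvd a"
    let ?t = "nat (a mod int M)"
    have "a mod int M \<noteq> 0" using nd by (simp add: dvd_eq_mod_eq_0)
    moreover have "a mod int M \<ge> 0" using M_pos by simp
    ultimately have "0 < ?t" by simp
    moreover have "?t < M" using M_pos by (simp add: nat_less_iff)
    ultimately have "om ^ ?t \<noteq> 1" by (rule om_pow_ne1)
    then show False using h unfolding E_def ep_def by simp
  qed
next
  assume "int M dvd a" then show "E a = 1" unfolding E_def ep_def by simp
qed

lemma norm_E[simp]: "norm (E a) = 1"
  unfolding E_def ep_def om_def by (simp add: norm_power)

lemma E_neg: "E (- a) = inverse (E a)"
proof -
  have "E a * E (-a) = 1" using E_add[of a "-a"] by simp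
  then show ?thesis by (simp add: inverse_unique)
qed

lemma cnj_E: "cnj (E a) = E (- a)"
proof -
  have "E a * cnj (E a) = 1" using complex_norm_square[of "E a"] by (simp add: mult.commute)
  then show ?thesis using E_neg inverse_unique by metis
qed

definition chi :: "int \<Rightarrow> 'a \<Rightarrow> complex" where
  "chi j z = (if z = 0 then 0 else E (j * dl z))"

lemma chi_gp: "chi j (gp i) = E (j * i)"
proof -
  have "(j * dl (gp i)) mod int M = (j * i) mod int M"
    using dl_gp[of i] by (metis mod_mult_right_eq)
  then have "E (j * dl (gp i)) = E (j * i)" by (rule E_cong)
  then show ?thesis unfolding chi_def by simp
qed

lemma chi_0[simp]: "chi j 0 = 0" unfolding chi_def by simp

lemma chi_mult: "chi j (x * y) = chi j x * chi j y"
proof (cases "x = 0 \<or> y = 0")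
  case True then show ?thesis by auto
next
  case False
  then obtain a b where "x = gp a" "y = gp b" using gp_surj by metis
  then have "chi j (x * y) = chi j (gp (a + b))" using gp_add[of a b] by simp
  then show ?thesis using chi_gp \<open>x = gp a\<close> \<open>y = gp b\<close> by (simp add: distrib_left E_add)
qed

lemma chi_add: "chi (j + j') z = chi j z * chi j' z"
  unfolding chi_def by (simp add: distrib_right E_add)

lemma chi_one[simp]: "chi j 1 = 1"
  using chi_gp[of j 0] by simp

lemma norm_chi: "z \<noteq> 0 \<Longrightarrow> norm (chi j z) = 1"
  unfolding chi_def by simp

lemma chi_triv: "int M dvd j \<Longrightarrow> chi j z = (if z = 0 then 0 else 1)"
  unfolding chi_def using E_one_iff by auto

lemma chi_inverse: "chi j (inverse z) = cnj (chi j z)"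
proof (cases "z = 0")
  case True then show ?thesis by simp
next
  case False
  then obtain a where "z = gp a" using gp_surj by metis
  then show ?thesis using gp_inverse chi_gp cnj_E by simp
qed

lemma sum_field: "(\<Sum>z\<in>UNIV. F z) = F 0 + (\<Sum>n<M. F (g ^ n))"
proof -
  have img: "(\<lambda>n. g ^ n) ` {..<M} = UNIV - {0}"
  proof
    show "(\<lambda>n. g ^ n) ` {..<M} \<subseteq> UNIV - {0}" using g_nz by auto
    show "UNIV - {0} \<subseteq> (\<lambda>n. g ^ n) ` {..<M}"
    proof
      fix z :: 'a assume "z \<in> UNIV - {0}"
      then obtain i where "z = g ^ i" using g_gen by auto
      then have "z = g ^ (i mod M)" using pow_mod_M[OF gM] by simp
      moreover have "i mod M < M" using M_pos by simp
      ultimately show "z \<in> (\<lambda>n. g ^ n) ` {..<M}" by blast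
    qed
  qed
  have "(\<Sum>z\<in>UNIV. F z) = F 0 + (\<Sum>z\<in>UNIV - {0}. F z)"
    by (rule sum.remove) auto
  also have "(\<Sum>z\<in>UNIV - {0}. F z) = (\<Sum>n<M. F (g ^ n))"
    using sum.reindex[OF inj_pow, of F] img by simp
  finally show ?thesis .
qed

lemma sum_chi: assumes "\<not> int M dvd j" shows "(\<Sum>z\<in>UNIV. chi j z) = 0"
proof -
  have cg: "chi j (g ^ n) = E j ^ n" for n
    using gp_nat[of n] chi_gp[of j "int n"] E_pow[of j n] by simp
  have "(\<Sum>z\<in>UNIV. chi j z) = (\<Sum>n<M. E j ^ n)"
    unfolding sum_field using cg by simp
  also have "\<dots> = 0"
  proof -
    have ne: "E j \<noteq> 1" using assms E_one_iff by simp
    have "E j ^ M = 1" using E_pow E_one_iff by simp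
    then show ?thesis using sum_gp_strict[of "E j" M] ne by simp
  qed
  finally show ?thesis .
qed

lemma sum_chi_ind:
  assumes "m dvd M" "m > 0"
  shows "(\<Sum>t<m. chi (int t * int (M div m)) z) = (if z \<noteq> 0 \<and> int m dvd dl z then of_nat m else 0)"
proof (cases "z = 0")
  case True then show ?thesis by simp
next
  case False
  let ?r = "M div m"
  have Mr: "M = m * ?r" using assms by simp
  have rpos: "?r > 0" using assms M_pos by (metis Mr gr0I mult_0_right)
  let ?w = "E (int ?r * dl z)"
  have terms: "chi (int t * int ?r) z = ?w ^ t" for t
    unfolding chi_def using False E_pow by (simp add: algebra_simps)
  have iff: "?w = 1 \<longleftrightarrow> int m dvd dl z"
  proof -
    have "?w = 1 \<longleftrightarrow> int M dvd int ?r * dl z" by (rule E_one_iff)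
    also have "\<dots> \<longleftrightarrow> int m * int ?r dvd dl z * int ?r"
    proof -
      have "int M = int m * int ?r" using Mr by (metis of_nat_mult)
      then show ?thesis by (simp add: mult.commute)
    qed
    also have "\<dots> \<longleftrightarrow> int m dvd dl z" using rpos by simp
    finally show ?thesis .
  qed
  show ?thesis
  proof (cases "int m dvd dl z")
    case True
    then show ?thesis using terms iff False by simp
  next
    case nd: False
    have "int M = int m * int ?r" using Mr by (metis of_nat_mult)
    then have "int M dvd int ?r * dl z * int m" by (simp add: algebra_simps)
    then have "?w ^ m = 1"
      using E_pow E_one_iff by simp
    then have "(\<Sum>t<m. ?w ^ t) = 0" using sum_gp_strict[of ?w m] iff nd by simp
    then show ?thesis using terms nd by simp
  qed
qed

end

context ffg begin

definition J :: "int \<Rightarrow> int \<Rightarrow> complex" where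
  "J a b = (\<Sum>z\<in>UNIV. chi a z * chi b (1 - z))"

lemma sum_shift1: "(\<Sum>z\<in>UNIV. F (1 - z)) = (\<Sum>z\<in>(UNIV::'a set). F z)"
  by (rule sum.reindex_bij_witness[where i="\<lambda>z. 1 - z" and j="\<lambda>z. 1 - z"]) auto

lemma sum_split1: "(\<Sum>z\<in>UNIV. F z) = F (c::'a) + (\<Sum>z\<in>UNIV - {c}. F z)"
  by (rule sum.remove) auto

lemma chi_0idx: "chi 0 z = (if z = 0 then 0 else 1)"
  using chi_triv[of 0] by simp

lemma J_0_left: assumes "\<not> int M dvd b" shows "J 0 b = -1"
proof -
  have "J 0 b = (\<Sum>z\<in>UNIV. chi b (1 - z)) - chi b 1"
  proof -
    have "(\<Sum>z\<in>UNIV. chi b (1 - z)) = chi b (1 - 0) + (\<Sum>z\<in>UNIV - {0}. chi b (1 - z))"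
      by (rule sum_split1)
    moreover have "J 0 b = chi 0 0 * chi b (1 - 0) + (\<Sum>z\<in>UNIV - {0}. chi 0 z * chi b (1 - z))"
      unfolding J_def by (rule sum_split1)
    moreover have "(\<Sum>z\<in>UNIV - {0}. chi 0 z * chi b (1 - z)) = (\<Sum>z\<in>UNIV - {0}. chi b (1 - z))"
      by (rule sum.cong) (auto simp: chi_0idx)
    ultimately show ?thesis by simp
  qed
  then show ?thesis using sum_shift1[of "chi b"] sum_chi[OF assms] by simp
qed

lemma J_0_right: assumes "\<not> int M dvd a" shows "J a 0 = -1"
proof -
  have "J a 0 = (\<Sum>z\<in>UNIV. chi a z) - chi a 1"
  proof -
    have "(\<Sum>z\<in>UNIV. chi a z) = chi a 1 + (\<Sum>z\<in>UNIV - {1}. chi a z)"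
      by (rule sum_split1)
    moreover have "J a 0 = chi a 1 * chi 0 (1 - 1) + (\<Sum>z\<in>UNIV - {1}. chi a z * chi 0 (1 - z))"
      unfolding J_def by (rule sum_split1)
    moreover have "(\<Sum>z\<in>UNIV - {1}. chi a z * chi 0 (1 - z)) = (\<Sum>z\<in>UNIV - {1}. chi a z)"
      by (rule sum.cong) (auto simp: chi_0idx)
    ultimately show ?thesis by simp
  qed
  then show ?thesis using sum_chi[OF assms] by simp
qed

lemma J_00: "J 0 0 = of_nat CARD('a) - 2"
proof -
  have "J 0 0 = (\<Sum>z::'a\<in>UNIV. (of_bool (z \<notin> {0, 1}) :: complex))"
    unfolding J_def by (rule sum.cong) (auto simp: chi_0idx)
  also have "\<dots> = of_nat (card (UNIV - {0::'a, 1}))"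
  proof -
    have "{z::'a. z \<noteq> 0 \<and> z \<noteq> 1} = UNIV - {0, 1}" by auto
    then show ?thesis by (simp add: of_bool_def sum.If_cases)
  qed
  also have "card (UNIV - {0::'a, 1}) = CARD('a) - 2"
    by (simp add: card_Diff_subset)
  finally show ?thesis using card_ge2 by (simp add: of_nat_diff)
qed

end

context ffg begin

lemma K_one: "(\<Sum>y\<in>UNIV. chi b ((1 - y * 1) / (1 - y))) = of_nat CARD('a) - 1"
proof -
  have "(\<Sum>y\<in>UNIV. chi b ((1 - y * 1) / (1 - y))) = chi b ((1 - 1 * 1) / (1 - 1)) + (\<Sum>y\<in>UNIV - {1}. chi b ((1 - y * 1) / (1 - y)))"
    by (rule sum_split1)
  also have "(\<Sum>y\<in>UNIV - {1}. chi b ((1 - y * 1) / (1 - y))) = (\<Sum>y\<in>UNIV - {1::'a}. 1)"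
    by (rule sum.cong) auto
  finally show ?thesis using card_ge2 by (simp add: card_Diff_subset of_nat_diff)
qed

lemma K_ne: assumes "t \<noteq> 1" "\<not> int M dvd b"
  shows "(\<Sum>y\<in>UNIV. chi b ((1 - y * t) / (1 - y))) = - chi b t"
proof -
  have "(\<Sum>y\<in>UNIV. chi b ((1 - y * t) / (1 - y))) = chi b ((1 - 1 * t) / (1 - 1)) + (\<Sum>y\<in>UNIV - {1}. chi b ((1 - y * t) / (1 - y)))"
    by (rule sum_split1)
  also have "(\<Sum>y\<in>UNIV - {1}. chi b ((1 - y * t) / (1 - y))) = (\<Sum>w\<in>UNIV - {t}. chi b w)"
  proof (rule sum.reindex_bij_witness[where i="\<lambda>w. (1 - w) / (t - w)" and j="\<lambda>y. (1 - y * t) / (1 - y)"])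
    fix y assume y: "y \<in> UNIV - {1::'a}"
    then have y1: "1 - y \<noteq> 0" by auto
    have tm: "t - (1 - y * t) / (1 - y) = (t - 1) / (1 - y)" using y1 by (simp add: field_simps)
    have tne: "t - 1 \<noteq> 0" using assms by auto
    have om2: "1 - (1 - y * t) / (1 - y) = y * (t - 1) / (1 - y)" using y1 by (simp add: field_simps)
    show "(1 - (1 - y * t) / (1 - y)) / (t - (1 - y * t) / (1 - y)) = y"
      using y1 tne unfolding tm om2 by simp
    show "(1 - y * t) / (1 - y) \<in> UNIV - {t}"
    proof
      show "(1 - y * t) / (1 - y) \<notin> {t}"
      proof
        assume "(1 - y * t) / (1 - y) \<in> {t}"
        then have "1 - y * t = t * (1 - y)" using y1 by (simp add: field_simps)
        then show False using assms by (simp add: algebra_simps)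
      qed
    qed simp
  next
    fix w assume w: "w \<in> UNIV - {t}"
    then have tw: "t - w \<noteq> 0" by auto
    have tne: "t - 1 \<noteq> 0" using assms by auto
    have om: "1 - (1 - w) / (t - w) = (t - 1) / (t - w)" using tw by (simp add: field_simps)
    have om3: "1 - (1 - w) / (t - w) * t = w * (t - 1) / (t - w)" using tw by (simp add: field_simps)
    show "(1 - (1 - w) / (t - w) * t) / (1 - (1 - w) / (t - w)) = w"
      using tw tne unfolding om om3 by simp
    show "(1 - w) / (t - w) \<in> UNIV - {1}"
    proof
      show "(1 - w) / (t - w) \<notin> {1}"
      proof
        assume "(1 - w) / (t - w) \<in> {1}"
        then have "1 - w = t - w" using tw by (simp add: field_simps)
        then show False using assms by simp
      qed
    qed simp
  qed simp
  also have "(\<Sum>w\<in>UNIV. chi b w) = chi b t + (\<Sum>w\<in>UNIV - {t}. chi b w)"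
    by (rule sum_split1)
  ultimately show ?thesis using sum_chi[OF assms(2)] by (simp add: eq_neg_iff_add_eq_0 add.commute)
qed

end

context ffg begin

lemma J_cnj: assumes a: "\<not> int M dvd a" and b: "\<not> int M dvd b"
  shows "J a b * cnj (J a b) = of_nat CARD('a) - (\<Sum>t\<in>UNIV. chi (a + b) t)"
proof -
  have c1: "cnj (J a b) = (\<Sum>y\<in>UNIV. chi a (inverse y) * chi b (inverse (1 - y)))"
    unfolding J_def by (simp add: chi_inverse)
  have c2: "J a b * cnj (J a b) = (\<Sum>y\<in>UNIV. \<Sum>x\<in>UNIV. chi a (x / y) * chi b ((1 - x) / (1 - y)))"
  proof -
    have "J a b * cnj (J a b) = (\<Sum>x\<in>UNIV. \<Sum>y\<in>UNIV. chi a x * chi b (1 - x) * (chi a (inverse y) * chi b (inverse (1 - y))))"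
      by (subst c1) (unfold J_def, rule sum_product)
    also have "\<dots> = (\<Sum>y\<in>UNIV. \<Sum>x\<in>UNIV. chi a x * chi b (1 - x) * (chi a (inverse y) * chi b (inverse (1 - y))))"
      by (rule sum.swap)
    also have "\<dots> = (\<Sum>y\<in>UNIV. \<Sum>x\<in>UNIV. chi a (x / y) * chi b ((1 - x) / (1 - y)))"
      by (simp add: divide_inverse chi_mult mult_ac)
    finally show ?thesis .
  qed
  have c3: "(\<Sum>x\<in>UNIV. chi a (x / y) * chi b ((1 - x) / (1 - y))) = (\<Sum>t\<in>UNIV. chi a t * chi b ((1 - y * t) / (1 - y)))" for y
  proof (cases "y = 0")
    case True
    then show ?thesis using sum_chi[OF a] by (simp add: sum_distrib_right[symmetric])
  next
    case False
    show ?thesis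
    proof (rule sym, rule sum.reindex_bij_witness[where i="\<lambda>x. x / y" and j="\<lambda>t. y * t"])
      fix t show "y * t / y = t" using False by simp
    next
      fix x show "y * (x / y) = x" using False by simp
    next
      fix t show "chi a (y * t / y) * chi b ((1 - y * t) / (1 - y)) = chi a t * chi b ((1 - y * t) / (1 - y))"
        using False by simp
    qed auto
  qed
  have c4: "J a b * cnj (J a b) = (\<Sum>t\<in>UNIV. chi a t * (\<Sum>y\<in>UNIV. chi b ((1 - y * t) / (1 - y))))"
  proof -
    have "J a b * cnj (J a b) = (\<Sum>y\<in>UNIV. \<Sum>t\<in>UNIV. chi a t * chi b ((1 - y * t) / (1 - y)))"
      unfolding c2 c3 ..
    also have "\<dots> = (\<Sum>t\<in>UNIV. \<Sum>y\<in>UNIV. chi a t * chi b ((1 - y * t) / (1 - y)))"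
      by (rule sum.swap)
    finally show ?thesis by (simp only: sum_distrib_left)
  qed
  have c5: "chi a t * (\<Sum>y\<in>UNIV. chi b ((1 - y * t) / (1 - y))) = - chi (a + b) t + (if t = 1 then of_nat CARD('a) else 0)" for t
  proof (cases "t = 1")
    case True
    then show ?thesis using K_one[of b] by simp
  next
    case False
    then show ?thesis using K_ne[OF False b] by (simp add: chi_add)
  qed
  show ?thesis unfolding c4 c5 by (simp add: sum.distrib sum_negf sum_subtractf)
qed

lemma norm_J: assumes a: "\<not> int M dvd a" and b: "\<not> int M dvd b"
  shows "norm (J a b) \<le> sqrt (real CARD('a))"
proof -
  let ?S = "(\<Sum>t\<in>UNIV. chi (a + b) t)"
  have e: "complex_of_real ((norm (J a b))\<^sup>2) = of_nat CARD('a) - ?S"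
    using J_cnj[OF a b] complex_norm_square[of "J a b"] by simp
  have "\<exists>r. ?S = complex_of_real r \<and> r \<ge> 0"
  proof (cases "int M dvd a + b")
    case True
    have "?S = chi (a+b) 0 + (\<Sum>t\<in>UNIV - {0}. chi (a + b) t)"
      by (rule sum_split1)
    also have "(\<Sum>t\<in>UNIV - {0}. chi (a + b) t) = (\<Sum>t\<in>UNIV - {0::'a}. 1)"
      by (rule sum.cong) (auto simp: chi_triv[OF True])
    finally have "?S = complex_of_real (real (card (UNIV - {0::'a})))" by simp
    then show ?thesis by (intro exI[of _ "real (card (UNIV - {0::'a}))"]) simp
  next
    case False then show ?thesis using sum_chi by (intro exI[of _ 0]) simp
  qed
  then obtain r where r: "?S = complex_of_real r" "r \<ge> 0" by blast
  have "complex_of_real ((norm (J a b))\<^sup>2) = complex_of_real (real CARD('a) - r)"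
    using e r by simp
  then have "(norm (J a b))\<^sup>2 = real CARD('a) - r" using of_real_eq_iff by blast
  then have "(norm (J a b))\<^sup>2 \<le> real CARD('a)" using r by simp
  then show ?thesis by (simp add: real_le_rsqrt)
qed

end

lemma sum_lt_Suc_shift: "(\<Sum>i<Suc n. f i) = f 0 + (\<Sum>i<n. f (Suc i))"
  for f :: "nat \<Rightarrow> 'b::comm_monoid_add"
  by (induct n) (simp_all add: add.assoc)

context ffg begin

lemma not_dvd_small: assumes "0 < k" "k < M" shows "\<not> int M dvd int k"
  using nat_dvd_not_less[OF assms] by simp

lemma count_exists:
  assumes m: "m dvd M" "m > 0" and l: "l dvd M" "l > 0"
    and c1: "c1 \<noteq> 0" and c2: "c2 \<noteq> 0"
    and bound: "real CARD('a) - 2 > real (m - 1) + real (l - 1) + real (m - 1) * real (l - 1) * sqrt (real CARD('a))"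
  shows "\<exists>a. a \<noteq> 0 \<and> a \<noteq> 1 \<and> int m dvd dl (a / c1) \<and> int l dvd dl ((1 - a) / c2)"
proof (rule ccontr)
  assume no: "\<not> ?thesis"
  define r where "r = M div m"
  define r' where "r' = M div l"
  have Mr: "M = m * r" using m unfolding r_def by simp
  have Mr': "M = l * r'" using l unfolding r'_def by simp
  define C where "C t u = chi (int t * int r) (inverse c1) * chi (int u * int r') (inverse c2)" for t u
  define T where "T t u = C t u * J (int t * int r) (int u * int r')" for t u
  have zero_prod: "(\<Sum>t<m. chi (int t * int r) (a / c1)) * (\<Sum>u<l. chi (int u * int r') ((1 - a) / c2)) = 0" for a
    unfolding r_def r'_def sum_chi_ind[OF m] sum_chi_ind[OF l] using no c1 c2 by auto
  have X: "chi (int t * int r) (a / c1) * chi (int u * int r') ((1 - a) / c2) = C t u * (chi (int t * int r) a * chi (int u * int r') (1 - a))" for a t u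
    unfolding C_def by (simp add: divide_inverse chi_mult mult_ac)
  have "0 = (\<Sum>a\<in>UNIV. (\<Sum>t<m. chi (int t * int r) (a / c1)) * (\<Sum>u<l. chi (int u * int r') ((1 - a) / c2)))"
    by (simp only: zero_prod sum.neutral_const)
  also have "\<dots> = (\<Sum>a\<in>UNIV. \<Sum>t<m. \<Sum>u<l. C t u * (chi (int t * int r) a * chi (int u * int r') (1 - a)))"
    by (simp add: sum_product X)
  also have "\<dots> = (\<Sum>t<m. \<Sum>a\<in>UNIV. \<Sum>u<l. C t u * (chi (int t * int r) a * chi (int u * int r') (1 - a)))"
    by (rule sum.swap)
  also have "\<dots> = (\<Sum>t<m. \<Sum>u<l. \<Sum>a\<in>UNIV. C t u * (chi (int t * int r) a * chi (int u * int r') (1 - a)))"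
    by (rule sum.cong[OF refl], rule sum.swap)
  also have "\<dots> = (\<Sum>t<m. \<Sum>u<l. T t u)"
    unfolding T_def J_def by (simp add: sum_distrib_left)
  finally have S0: "(\<Sum>t<m. \<Sum>u<l. T t u) = 0" by simp
  obtain m' where m': "m = Suc m'" using m by (cases m) auto
  obtain l' where l': "l = Suc l'" using l by (cases l) auto
  have nC: "norm (C t u) = 1" for t u unfolding C_def using c1 c2 by (simp add: norm_mult norm_chi)
  have nd_t: "\<not> int M dvd int (Suc t) * int r" if "t < m'" for t
  proof -
    have "0 < Suc t * r" using Mr M_pos by simp
    moreover have "Suc t * r < M" using that m' Mr M_pos by (simp add: mult_less_mono1)
    ultimately show ?thesis using not_dvd_small by (metis of_nat_mult)
  qed
  have nd_u: "\<not> int M dvd int (Suc u) * int r'" if "u < l'" for u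
  proof -
    have "0 < Suc u * r'" using Mr' M_pos by simp
    moreover have "Suc u * r' < M" using that l' Mr' M_pos by (simp add: mult_less_mono1)
    ultimately show ?thesis using not_dvd_small by (metis of_nat_mult)
  qed
  have T00: "T 0 0 = of_nat CARD('a) - 2" unfolding T_def C_def using J_00 c1 c2 by (simp add: chi_0idx)
  define A where "A = (\<Sum>u<l'. T 0 (Suc u))"
  define B where "B = (\<Sum>t<m'. T (Suc t) 0)"
  define Cc where "Cc = (\<Sum>t<m'. \<Sum>u<l'. T (Suc t) (Suc u))"
  have split: "(\<Sum>t<m. \<Sum>u<l. T t u) = T 0 0 + A + B + Cc"
    unfolding m' l' A_def B_def Cc_def sum_lt_Suc_shift by (simp add: sum.distrib add_ac)
  have nA: "norm A \<le> real l'"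
  proof -
    have "norm A \<le> (\<Sum>u<l'. norm (T 0 (Suc u)))" unfolding A_def by (rule norm_sum)
    also have "\<dots> = (\<Sum>u<l'. 1)"
      by (rule sum.cong) (use nd_u in \<open>auto simp: T_def norm_mult nC J_0_left\<close>)
    finally show ?thesis by simp
  qed
  have nB: "norm B \<le> real m'"
  proof -
    have "norm B \<le> (\<Sum>t<m'. norm (T (Suc t) 0))" unfolding B_def by (rule norm_sum)
    also have "\<dots> = (\<Sum>t<m'. 1)"
      by (rule sum.cong) (use nd_t in \<open>auto simp: T_def norm_mult nC J_0_right\<close>)
    finally show ?thesis by simp
  qed
  have nCc: "norm Cc \<le> real m' * real l' * sqrt (real CARD('a))"
  proof -
    have "norm Cc \<le> (\<Sum>t<m'. norm (\<Sum>u<l'. T (Suc t) (Suc u)))" unfolding Cc_def by (rule norm_sum)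
    also have "\<dots> \<le> (\<Sum>t<m'. \<Sum>u<l'. norm (T (Suc t) (Suc u)))"
      by (rule sum_mono) (rule norm_sum)
    also have "\<dots> \<le> (\<Sum>t<m'. \<Sum>u<l'. sqrt (real CARD('a)))"
    proof (rule sum_mono, rule sum_mono)
      fix t u assume "t \<in> {..<m'}" "u \<in> {..<l'}"
      then show "norm (T (Suc t) (Suc u)) \<le> sqrt (real CARD('a))"
        using nd_t nd_u norm_J by (simp add: T_def norm_mult nC)
    qed
    finally show ?thesis by simp
  qed
  have "T 0 0 + A + B + Cc = 0" using S0 split by simp
  then have "T 0 0 = - (A + B + Cc)" by (simp add: algebra_simps eq_neg_iff_add_eq_0)
  then have "norm (T 0 0) \<le> norm A + norm B + norm Cc"
    by (metis norm_minus_cancel norm_triangle_ineq order_trans add_mono order_refl)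
  moreover have "norm (T 0 0) = real CARD('a) - 2" unfolding T00 using card_ge2
    by (metis norm_of_nat of_nat_diff of_nat_numeral)
  ultimately have "real CARD('a) - 2 \<le> real l' + real m' + real m' * real l' * sqrt (real CARD('a))"
    using nA nB nCc by linarith
  then show False using bound m' l' by simp
qed

end

lemma powgcd: fixes q :: int assumes "q \<ge> 1"
  shows "gcd (q ^ a - 1) (q ^ b - 1) = q ^ (gcd a b) - 1"
proof (induction a b rule: gcd_nat_induct)
  case (base a)
  have "q ^ a \<ge> 1" using assms by simp
  then show ?case by simp
next
  case (step a b)
  define r where "r = a mod b"
  define t where "t = a div b"
  have a: "a = b * t + r" unfolding r_def t_def by simp
  obtain K where K: "(q ^ b) ^ t - 1 = (q ^ b - 1) * K"
    using power_diff_1_eq[of "q ^ b" t] by blast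
  have "q ^ a - 1 = q ^ r * ((q ^ b) ^ t - 1) + (q ^ r - 1)"
    unfolding a by (simp add: power_add power_mult algebra_simps)
  also have "\<dots> = (q ^ r * K) * (q ^ b - 1) + (q ^ r - 1)" unfolding K by (simp add: algebra_simps)
  finally have e: "q ^ a - 1 = (q ^ r * K) * (q ^ b - 1) + (q ^ r - 1)" .
  have "gcd (q ^ a - 1) (q ^ b - 1) = gcd (q ^ b - 1) ((q ^ r * K) * (q ^ b - 1) + (q ^ r - 1))"
    unfolding e by (simp add: gcd.commute)
  also have "\<dots> = gcd (q ^ b - 1) (q ^ r - 1)" by (rule gcd_add_mult)
  also have "\<dots> = q ^ gcd b r - 1" using step unfolding r_def by simp
  also have "gcd b r = gcd a b" unfolding r_def by (metis gcd_red_nat)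
  finally show ?case .
qed

lemma lin_solv: fixes P E M c :: int
  assumes "gcd P (gcd E M) dvd c" shows "\<exists>i j. M dvd i * P + j * E - c"
proof -
  obtain u1 v1 where 1: "u1 * E + v1 * M = gcd E M" using bezout_int by blast
  obtain u v where 2: "u * P + v * gcd E M = gcd P (gcd E M)" using bezout_int by blast
  obtain w where w: "c = gcd P (gcd E M) * w" using assms by blast
  have c: "c = (u * P + v * (u1 * E + v1 * M)) * w" using w 1 2 by simp
  have "(u * w) * P + (v * u1 * w) * E - c = M * (- v * v1 * w)"
    unfolding c by (simp add: algebra_simps)
  then show ?thesis by (metis dvd_triv_left)
qed

lemma coprime_pm1: fixes q :: int assumes "n > 0" shows "coprime (q ^ n - 1) q"
proof (rule coprimeI)
  fix d assume d1: "d dvd q ^ n - 1" and d2: "d dvd q"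
  have "d dvd q ^ n" using dvd_trans[OF d2 dvd_power[of n q]] assms by simp
  then have "d dvd q ^ n - (q ^ n - 1)" using d1 by (rule dvd_diff)
  then show "is_unit d" by simp
qed

context ffg begin

lemma solv_gp: assumes "z \<noteq> 0"
  shows "(\<exists>i j. gp (i * P + j * Eq) = z) \<longleftrightarrow> gcd P (gcd Eq (int M)) dvd dl z"
proof
  assume "\<exists>i j. gp (i * P + j * Eq) = z"
  then obtain i j where ij: "gp (i * P + j * Eq) = z" by blast
  have "gp (i * P + j * Eq) = gp (dl z)" using ij gp_dl[OF assms] by simp
  then have "(i * P + j * Eq) mod int M = dl z mod int M" by (simp only: gp_eq_iff)
  then have "int M dvd (i * P + j * Eq) - dl z" by (simp add: mod_eq_dvd_iff)
  then have 1: "gcd P (gcd Eq (int M)) dvd (i * P + j * Eq) - dl z"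
    using dvd_trans[OF dvd_trans[OF gcd_dvd2[of P "gcd Eq (int M)"] gcd_dvd2[of Eq "int M"]]] by blast
  have "gcd P (gcd Eq (int M)) dvd P" by simp
  moreover have "gcd P (gcd Eq (int M)) dvd Eq" by (rule dvd_trans[OF gcd_dvd2[of P "gcd Eq (int M)"] gcd_dvd1[of Eq "int M"]])
  ultimately have 2: "gcd P (gcd Eq (int M)) dvd i * P + j * Eq" by (intro dvd_add dvd_mult)
  have "dl z = (i * P + j * Eq) - ((i * P + j * Eq) - dl z)" by simp
  then show "gcd P (gcd Eq (int M)) dvd dl z" using dvd_diff[OF 2 1] by simp
next
  assume "gcd P (gcd Eq (int M)) dvd dl z"
  then obtain i j where "int M dvd i * P + j * Eq - dl z" using lin_solv by blast
  then have "(i * P + j * Eq) mod int M = dl z mod int M" by (simp add: mod_eq_dvd_iff)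
  then have "gp (i * P + j * Eq) = gp (dl z)" by (simp only: gp_eq_iff)
  then have "gp (i * P + j * Eq) = z" using gp_dl[OF assms] by simp
  then show "\<exists>i j. gp (i * P + j * Eq) = z" by blast
qed

end

lemma span1_eq: fixes a b c e :: "'a::field" assumes a: "a \<noteq> 0" and c: "c \<noteq> 0"
  shows "span1 (a, b) = span1 (c, e) \<longleftrightarrow> b / a = e / c"
proof
  assume h: "span1 (a, b) = span1 (c, e)"
  have "(c, e) \<in> span1 (c, e)" unfolding span1_def by (auto intro: exI[of _ 1])
  then have "(c, e) \<in> span1 (a, b)" using h by simp
  then obtain t where t: "c = t * a" "e = t * b" unfolding span1_def by auto
  then have "t \<noteq> 0" using c by auto
  then show "b / a = e / c" using t a by (simp add: field_simps)
next
  assume h: "b / a = e / c"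
  then have e: "e = c * b / a" using a c by (simp add: field_simps)
  show "span1 (a, b) = span1 (c, e)"
  proof
    show "span1 (a, b) \<subseteq> span1 (c, e)"
    proof
      fix p assume "p \<in> span1 (a, b)"
      then obtain s where p: "p = (s * a, s * b)" unfolding span1_def by auto
      have "p = ((s * a / c) * c, (s * a / c) * e)" unfolding p e using a c by (simp add: field_simps)
      then show "p \<in> span1 (c, e)" unfolding span1_def by (intro CollectI exI[of _ "s * a / c"]) simp
    qed
    show "span1 (c, e) \<subseteq> span1 (a, b)"
    proof
      fix p assume "p \<in> span1 (c, e)"
      then obtain s where p: "p = (s * c, s * e)" unfolding span1_def by auto
      have "p = ((s * c / a) * a, (s * c / a) * b)" unfolding p e using a c by (simp add: field_simps)
      then show "p \<in> span1 (a, b)" unfolding span1_def by (intro CollectI exI[of _ "s * c / a"]) simp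
    qed
  qed
qed

lemma cond_iff:
  fixes \<alpha> \<beta> ad :: "'a::field" and q k h d :: nat
  assumes ad: "ad \<noteq> 0" and q: "q > 0"
  shows "Lset (\<lambda>x. \<alpha> * x ^ (q ^ k) + \<beta> * x) \<inter> sigmaL q h (\<lambda>y. ad * y ^ (q ^ d)) \<noteq> {}
    \<longleftrightarrow> (\<exists>x y. x \<noteq> 0 \<and> y \<noteq> 0 \<and> \<alpha> * x ^ (q ^ k - 1) + \<beta> = y ^ (q ^ h) / (ad * y ^ (q ^ d)))"
proof -
  have pk: "q ^ k = Suc (q ^ k - 1)" using q by simp
  have gx: "(\<alpha> * x ^ (q ^ k) + \<beta> * x) / x = \<alpha> * x ^ (q ^ k - 1) + \<beta>" if "x \<noteq> 0" for x :: 'a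
  proof -
    have "x ^ (q ^ k) = x * x ^ (q ^ k - 1)" by (subst pk) simp
    then show ?thesis using that by (simp add: field_simps)
  qed
  have "Lset (\<lambda>x. \<alpha> * x ^ (q ^ k) + \<beta> * x) \<inter> sigmaL q h (\<lambda>y. ad * y ^ (q ^ d)) \<noteq> {}
    \<longleftrightarrow> (\<exists>x y. x \<noteq> 0 \<and> y \<noteq> 0 \<and> span1 (x, \<alpha> * x ^ (q ^ k) + \<beta> * x) = span1 (ad * y ^ (q ^ d), y ^ (q ^ h)))"
    unfolding Lset_def sigmaL_def by blast
  also have "\<dots> \<longleftrightarrow> (\<exists>x y. x \<noteq> 0 \<and> y \<noteq> 0 \<and> \<alpha> * x ^ (q ^ k - 1) + \<beta> = y ^ (q ^ h) / (ad * y ^ (q ^ d)))"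
  proof -
    have "span1 (x, \<alpha> * x ^ (q ^ k) + \<beta> * x) = span1 (ad * y ^ (q ^ d), y ^ (q ^ h))
      \<longleftrightarrow> \<alpha> * x ^ (q ^ k - 1) + \<beta> = y ^ (q ^ h) / (ad * y ^ (q ^ d))" if "x \<noteq> 0" "y \<noteq> 0" for x y :: 'a
      using span1_eq[of x "ad * y ^ (q ^ d)"] that ad gx[OF that(1)] by simp
    then show ?thesis by blast
  qed
  finally show ?thesis .
qed

lemma gcd_diffpow: fixes Q :: int assumes n: "n > 0"
  shows "gcd (Q ^ d - Q ^ h) (Q ^ n - 1) = gcd (Q ^ (nat \<bar>int d - int h\<bar>) - 1) (Q ^ n - 1)"
proof -
  have cop: "coprime (Q ^ n - 1) (Q ^ j)" for j
    using coprime_pm1[OF n, of Q] by simp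
  show ?thesis
  proof (cases "h \<le> d")
    case True
    define s where "s = d - h"
    have s: "nat \<bar>int d - int h\<bar> = s" unfolding s_def using True by simp
    have "Q ^ d - Q ^ h = Q ^ h * (Q ^ s - 1)"
      unfolding s_def using True by (simp add: algebra_simps power_add[symmetric])
    then show ?thesis unfolding s using gcd_mult_left_left_cancel[OF cop[of h], of "Q ^ s - 1"] by simp
  next
    case False
    define s where "s = h - d"
    have s: "nat \<bar>int d - int h\<bar> = s" unfolding s_def using False by simp
    have "Q ^ d - Q ^ h = - (Q ^ d * (Q ^ s - 1))"
      unfolding s_def using False by (simp add: algebra_simps power_add[symmetric])
    then show ?thesis unfolding s using gcd_mult_left_left_cancel[OF cop[of d], of "Q ^ s - 1"] by simp
  qed
qed

lemma int_pow_m1: "q > 0 \<Longrightarrow> int (q ^ a - 1) = int q ^ a - 1"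
  by (simp add: of_nat_diff)

lemma Gval: assumes q: "q \<ge> (2::nat)" and n: "n > 0"
  shows "gcd (int (q ^ k - 1)) (gcd (int (q ^ d) - int (q ^ h)) (int (q ^ n - 1)))
       = int (q ^ (gcd n (gcd k (nat \<bar>int d - int h\<bar>))) - 1)"
proof -
  let ?Q = "int q"
  let ?s = "nat \<bar>int d - int h\<bar>"
  have Q1: "?Q \<ge> 1" using q by simp
  have "gcd (int (q ^ k - 1)) (gcd (int (q ^ d) - int (q ^ h)) (int (q ^ n - 1)))
      = gcd (?Q ^ k - 1) (gcd (?Q ^ d - ?Q ^ h) (?Q ^ n - 1))"
    using q by (simp add: int_pow_m1)
  also have "\<dots> = gcd (?Q ^ k - 1) (gcd (?Q ^ ?s - 1) (?Q ^ n - 1))"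
    using gcd_diffpow[OF n, of ?Q d h] by simp
  also have "\<dots> = ?Q ^ (gcd k (gcd ?s n)) - 1"
    using powgcd[OF Q1] by simp
  also have "gcd k (gcd ?s n) = gcd n (gcd k ?s)"
    using gcd.left_commute[of k n ?s] gcd.commute[of ?s n] by argo
  finally show ?thesis using q by (simp add: int_pow_m1)
qed

lemma e_eq: "nat (gcd (int n) (gcd (int k) (int d - int h))) = gcd n (gcd k (nat \<bar>int d - int h\<bar>))"
proof -
  have "gcd (int k) (int d - int h) = gcd (int k) \<bar>int d - int h\<bar>" by simp
  also have "\<bar>int d - int h\<bar> = int (nat \<bar>int d - int h\<bar>)" by simp
  finally have "gcd (int k) (int d - int h) = int (gcd k (nat \<bar>int d - int h\<bar>))"
    by (simp only: gcd_int_int_eq)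
  then show ?thesis by (simp only: gcd_int_int_eq nat_int)
qed

lemma dvd_pow_m1: assumes "e dvd n" "q > (0::nat)" shows "(q ^ e - 1) dvd (q ^ n - 1)"
proof -
  obtain t where t: "n = e * t" using assms by blast
  obtain K where K: "(int q ^ e) ^ t - 1 = (int q ^ e - 1) * K"
    using power_diff_1_eq[of "int q ^ e" t] by blast
  have "int (q ^ n - 1) = int (q ^ e - 1) * K"
    using assms(2) K unfolding t by (simp add: int_pow_m1 power_mult)
  then have "int (q ^ e - 1) dvd int (q ^ n - 1)" by simp
  then show ?thesis by simp
qed

context ffg begin

lemma gp_key: "gp i ^ a * (gp j ^ b / gp j ^ c) = gp (i * int a + j * (int b - int c))"
proof -
  have "gp i ^ a * (gp j ^ b / gp j ^ c) = gp (i * int a) * (gp (j * int b) * inverse (gp (j * int c)))"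
    by (simp add: gp_pow divide_inverse)
  also have "\<dots> = gp (i * int a + (j * int b + - (j * int c)))"
    by (simp only: gp_inverse gp_add)
  also have "i * int a + (j * int b + - (j * int c)) = i * int a + j * (int b - int c)"
    by (simp add: algebra_simps)
  finally show ?thesis .
qed

lemma part1_core:
  fixes z :: 'a
  assumes q: "q \<ge> 2" and card: "CARD('a) = q ^ n" and n: "n > 0" and z: "z \<noteq> 0"
  shows "(\<exists>x y. x \<noteq> 0 \<and> y \<noteq> 0 \<and> x ^ (q ^ k - 1) * (y ^ (q ^ d) / y ^ (q ^ h)) = z)
     \<longleftrightarrow> z ^ ((q ^ n - 1) div (q ^ (gcd n (gcd k (nat \<bar>int d - int h\<bar>))) - 1)) = 1"
proof -
  define e where "e = gcd n (gcd k (nat \<bar>int d - int h\<bar>))"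
  define P where "P = int (q ^ k - 1)"
  define Eq where "Eq = int (q ^ d) - int (q ^ h)"
  define T where "T = (q ^ n - 1) div (q ^ e - 1)"
  have Mq: "M = q ^ n - 1" unfolding M_def card ..
  have "(\<exists>x y. x \<noteq> 0 \<and> y \<noteq> 0 \<and> x ^ (q ^ k - 1) * (y ^ (q ^ d) / y ^ (q ^ h)) = z)
     \<longleftrightarrow> (\<exists>i j. gp (i * P + j * Eq) = z)"
  proof
    assume "\<exists>x y. x \<noteq> 0 \<and> y \<noteq> 0 \<and> x ^ (q ^ k - 1) * (y ^ (q ^ d) / y ^ (q ^ h)) = z"
    then obtain x y where xy: "x \<noteq> 0" "y \<noteq> 0" "x ^ (q ^ k - 1) * (y ^ (q ^ d) / y ^ (q ^ h)) = z" by blast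
    obtain i where i: "x = gp i" using gp_surj xy(1) by blast
    obtain j where j: "y = gp j" using gp_surj xy(2) by blast
    have "gp (i * P + j * Eq) = z" using xy(3) unfolding i j gp_key P_def Eq_def .
    then show "\<exists>i j. gp (i * P + j * Eq) = z" by blast
  next
    assume "\<exists>i j. gp (i * P + j * Eq) = z"
    then obtain i j where "gp (i * P + j * Eq) = z" by blast
    then have "gp i ^ (q ^ k - 1) * (gp j ^ (q ^ d) / gp j ^ (q ^ h)) = z"
      unfolding gp_key P_def Eq_def .
    then show "\<exists>x y. x \<noteq> 0 \<and> y \<noteq> 0 \<and> x ^ (q ^ k - 1) * (y ^ (q ^ d) / y ^ (q ^ h)) = z"
      using gp_nz by blast
  qed
  also have "\<dots> \<longleftrightarrow> gcd P (gcd Eq (int M)) dvd dl z" by (rule solv_gp[OF z])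
  also have "gcd P (gcd Eq (int M)) = int (q ^ e - 1)"
    unfolding P_def Eq_def Mq e_def by (rule Gval[OF q n])
  finally have L: "(\<exists>x y. x \<noteq> 0 \<and> y \<noteq> 0 \<and> x ^ (q ^ k - 1) * (y ^ (q ^ d) / y ^ (q ^ h)) = z)
     \<longleftrightarrow> int (q ^ e - 1) dvd dl z" .
  have edvd: "e dvd n" unfolding e_def by simp
  have MT: "M = (q ^ e - 1) * T" unfolding T_def Mq using dvd_pow_m1[OF edvd] q by simp
  have Tpos: "T > 0" using MT M_pos by (metis gr0I mult_0_right)
  have "z ^ T = gp (dl z * int T)" using gp_dl[OF z] gp_pow by metis
  then have "z ^ T = 1 \<longleftrightarrow> int M dvd dl z * int T" using gp_one_iff by simp
  also have "\<dots> \<longleftrightarrow> int (q ^ e - 1) * int T dvd dl z * int T" unfolding MT by simp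
  also have "\<dots> \<longleftrightarrow> int (q ^ e - 1) dvd dl z" using Tpos by simp
  finally show ?thesis using L unfolding T_def e_def by simp
qed

end

lemma bound_ineq:
  fixes A B S X Y :: real
  assumes A: "A \<ge> 2" and B: "B \<ge> 2" and AB: "A * B \<le> S"
    and X: "0 \<le> X" "X \<le> A - 2" and Y: "0 \<le> Y" "Y \<le> B - 2"
  shows "S * S - 2 > X + Y + X * Y * S"
proof -
  have "2 * 2 \<le> A * B" using A B by (intro mult_mono) auto
  then have S0: "S \<ge> 4" using AB by linarith
  have h1: "X * Y * S \<le> (A - 2) * (B - 2) * S"
    using X Y S0 by (intro mult_right_mono mult_mono) auto
  have "A * B * S \<le> S * S" using AB S0 by (intro mult_right_mono) auto
  then have h2: "(A - 2) * (B - 2) * S \<le> S * S - S * (2 * A + 2 * B - 4)"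
    by (simp add: algebra_simps)
  have h3: "S * (2 * A + 2 * B - 4) \<ge> 4 * (2 * A + 2 * B - 4)"
    using S0 A B by (intro mult_right_mono) auto
  have gen: "X + Y + p1 < p3 - 2"
    if "p1 \<le> p2" "p2 \<le> p3 - p4" "4 * (2 * A + 2 * B - 4) \<le> p4" for p1 p2 p3 p4 :: real
    using that X Y A B by (smt (verit))
  show ?thesis by (rule gen[OF h1 h2 h3])
qed

context ffg begin

lemma part2:
  fixes \<alpha> \<beta> ad :: 'a
  assumes q: "q \<ge> 2" and card: "CARD('a) = q ^ n" and k: "k \<ge> 1"
    and al: "\<alpha> \<noteq> 0" and be: "\<beta> \<noteq> 0" and ad: "ad \<noteq> 0" and dh: "d \<noteq> h"
    and bnd: "2 * (k + nat \<bar>int d - int h\<bar>) \<le> n"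
  shows "\<exists>x y. x \<noteq> 0 \<and> y \<noteq> 0 \<and> \<alpha> * x ^ (q ^ k - 1) + \<beta> = y ^ (q ^ h) / (ad * y ^ (q ^ d))"
proof -
  define s where "s = nat \<bar>int d - int h\<bar>"
  have s1: "s \<ge> 1" unfolding s_def using dh by simp
  have n0: "n > 0" using bnd k by simp
  have Mq: "M = q ^ n - 1" unfolding M_def card ..
  define m where "m = gcd (q ^ k - 1) M"
  define l where "l = gcd (q ^ s - 1) M"
  have qk: "q ^ k \<ge> 2" using q k by (metis power_increasing power_one_right order_trans le_trans one_le_numeral)
  have qs: "q ^ s \<ge> 2" using q s1 by (metis power_increasing power_one_right order_trans le_trans one_le_numeral)
  have mdvd: "m dvd M" and ldvd: "l dvd M" unfolding m_def l_def by simp_all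
  have mpos: "m > 0" and lpos: "l > 0" unfolding m_def l_def using M_pos by simp_all
  have mle: "m \<le> q ^ k - 1" unfolding m_def using qk by (intro gcd_le1_nat) simp
  have lle: "l \<le> q ^ s - 1" unfolding l_def using qs by (intro gcd_le1_nat) simp
  define c1 where "c1 = - \<alpha> / \<beta>"
  define c2 where "c2 = 1 / (ad * \<beta>)"
  have c1: "c1 \<noteq> 0" unfolding c1_def using al be by simp
  have c2: "c2 \<noteq> 0" unfolding c2_def using ad be by simp
  have bound: "real CARD('a) - 2 > real (m - 1) + real (l - 1) + real (m - 1) * real (l - 1) * sqrt (real CARD('a))"
  proof -
    let ?S = "sqrt (real CARD('a))"
    have SS: "?S * ?S = real CARD('a)" by simp
    have "(real (q ^ k) * real (q ^ s))\<^sup>2 = real (q ^ (2 * (k + s)))"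
      by (simp add: power_mult_distrib power_add power_mult[symmetric] mult.commute)
    also have "\<dots> \<le> real (q ^ n)" using bnd q unfolding s_def by (simp add: power_increasing)
    finally have "real (q ^ k) * real (q ^ s) \<le> ?S" unfolding card by (rule real_le_rsqrt)
    moreover have "real (m - 1) \<le> real (q ^ k) - 2" using mle mpos qk by linarith
    moreover have "real (l - 1) \<le> real (q ^ s) - 2" using lle lpos qs by linarith
    ultimately have "?S * ?S - 2 > real (m - 1) + real (l - 1) + real (m - 1) * real (l - 1) * ?S"
      using qk qs by (intro bound_ineq) auto
    then show ?thesis using SS by simp
  qed
  obtain a where a: "a \<noteq> 0" "a \<noteq> 1" "int m dvd dl (a / c1)" "int l dvd dl ((1 - a) / c2)"
    using count_exists[OF mdvd mpos ldvd lpos c1 c2 bound] by blast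
  define u where "u = a / c1"
  define v where "v = (1 - a) / c2"
  have u0: "u \<noteq> 0" unfolding u_def using a c1 by simp
  have v0: "v \<noteq> 0" unfolding v_def using a c2 by simp
  have g1: "gcd (int (q ^ k - 1)) (gcd 0 (int M)) = int m"
    unfolding m_def by (simp add: gcd_int_int_eq)
  obtain i j where ij: "gp (i * int (q ^ k - 1) + j * 0) = u"
    using solv_gp[OF u0, of "int (q ^ k - 1)" 0] a(3) unfolding g1 u_def by blast
  have g2: "gcd 0 (gcd (int (q ^ h) - int (q ^ d)) (int M)) = int l"
  proof -
    have "gcd (int (q ^ h) - int (q ^ d)) (int M) = gcd (int q ^ h - int q ^ d) (int q ^ n - 1)"
      unfolding Mq using q by (simp add: int_pow_m1)
    also have "\<dots> = gcd (int q ^ (nat \<bar>int h - int d\<bar>) - 1) (int q ^ n - 1)"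
      by (rule gcd_diffpow[OF n0])
    also have "nat \<bar>int h - int d\<bar> = s" unfolding s_def by simp
    also have "gcd (int q ^ s - 1) (int q ^ n - 1) = int l"
    proof -
      have "int l = gcd (int (q ^ s - 1)) (int (q ^ n - 1))" by (simp only: l_def Mq gcd_int_int_eq)
      also have "int (q ^ s - 1) = int q ^ s - 1" using q by (intro int_pow_m1) simp
      also have "int (q ^ n - 1) = int q ^ n - 1" using q by (intro int_pow_m1) simp
      finally show ?thesis by simp
    qed
    finally show ?thesis by simp
  qed
  obtain i' j' where ij': "gp (i' * 0 + j' * (int (q ^ h) - int (q ^ d))) = v"
    using solv_gp[OF v0, of 0 "int (q ^ h) - int (q ^ d)"] a(4) unfolding g2 v_def by blast
  define x where "x = gp i"
  define y where "y = gp j'"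
  have xu: "x ^ (q ^ k - 1) = u" using ij unfolding x_def by (simp add: gp_pow)
  have yv: "y ^ (q ^ h) / y ^ (q ^ d) = v"
    using ij' gp_key[of 0 0 j' "q ^ h" "q ^ d"] unfolding y_def by simp
  have "y ^ (q ^ h) / (ad * y ^ (q ^ d)) = v / ad" using yv ad by (simp add: field_simps)
  also have "\<dots> = \<alpha> * u + \<beta>" unfolding u_def v_def c1_def c2_def using al be ad by (simp add: field_simps)
  finally show ?thesis using xu gp_nz unfolding x_def y_def by metis
qed

end

theorem proposition3p13:
  fixes \<alpha> \<beta> ad :: "'a::{finite,field}" and q n k d h :: nat
  assumes "prime_power q" and "n \<ge> 2" and "CARD('a) = q ^ n"
    and "\<alpha> \<noteq> 0" and "1 \<le> k" and "k < n"
    and "ad \<noteq> 0" and "d < n" and "h < n"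
  shows "(d = h \<or> \<beta> = 0 \<longrightarrow>
           (Lset (\<lambda>x. \<alpha> * x ^ (q ^ k) + \<beta> * x) \<inter> sigmaL q h (\<lambda>y. ad * y ^ (q ^ d)) \<noteq> {}
            \<longleftrightarrow> normq q n (nat (gcd (int n) (gcd (int k) (int d - int h))))
                   ((1 - \<beta> * ad) / (\<alpha> * ad)) = 1))
       \<and> (d \<noteq> h \<and> \<beta> \<noteq> 0 \<and> 2 * (int k + \<bar>int d - int h\<bar>) \<le> int n \<longrightarrow>
           Lset (\<lambda>x. \<alpha> * x ^ (q ^ k) + \<beta> * x) \<inter> sigmaL q h (\<lambda>y. ad * y ^ (q ^ d)) \<noteq> {})"
proof -
  note pp = assms(1) and n2 = assms(2) and card = assms(3) and al = assms(4) and k1 = assms(5)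
    and ad = assms(7)
  obtain p m0 where p: "prime p" "m0 > 0" "q = p ^ m0" using pp unfolding prime_power_def by blast
  have q2: "q \<ge> 2"
  proof -
    have "p \<ge> 2" using p(1) by (rule prime_ge_2_nat)
    moreover have "p \<le> p ^ m0" using p(2) \<open>p \<ge> 2\<close> by (intro self_le_power) auto
    ultimately show ?thesis using p(3) by simp
  qed
  have q0: "q > 0" using q2 by simp
  have n0: "n > 0" using n2 by simp
  obtain g :: 'a where g: "g \<noteq> 0" "\<And>z. z \<noteq> 0 \<Longrightarrow> \<exists>i::nat. z = g ^ i"
    using fin_field_gen by blast
  interpret ffg g by (unfold_locales) (use g in auto)
  let ?C = "Lset (\<lambda>x. \<alpha> * x ^ (q ^ k) + \<beta> * x) \<inter> sigmaL q h (\<lambda>y. ad * y ^ (q ^ d)) \<noteq> {}"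
  have cond: "?C \<longleftrightarrow> (\<exists>x y. x \<noteq> 0 \<and> y \<noteq> 0 \<and> \<alpha> * x ^ (q ^ k - 1) + \<beta> = y ^ (q ^ h) / (ad * y ^ (q ^ d)))"
    by (rule cond_iff[OF ad q0])
  show ?thesis
  proof (intro conjI impI)
    assume c: "d = h \<or> \<beta> = 0"
    define z where "z = (1 - \<beta> * ad) / (\<alpha> * ad)"
    define e where "e = gcd n (gcd k (nat \<bar>int d - int h\<bar>))"
    have ee: "nat (gcd (int n) (gcd (int k) (int d - int h))) = e" unfolding e_def by (rule e_eq)
    have eq: "(\<alpha> * x ^ (q ^ k - 1) + \<beta> = y ^ (q ^ h) / (ad * y ^ (q ^ d)))
       \<longleftrightarrow> x ^ (q ^ k - 1) * (y ^ (q ^ d) / y ^ (q ^ h)) = z" if "x \<noteq> 0" "y \<noteq> 0" for x y :: 'a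
    proof -
      have W: "y ^ (q ^ d) \<noteq> 0" "y ^ (q ^ h) \<noteq> 0" using that by simp_all
      show ?thesis
      proof (cases "d = h")
        case True
        have l1: "(\<alpha> * X + \<beta> = 1 / ad) \<longleftrightarrow> X = (1 - \<beta> * ad) / (\<alpha> * ad)" for X
          using al ad by (auto simp: field_simps)
        have hy: "y ^ (q ^ h) / (ad * y ^ (q ^ d)) = 1 / ad" "y ^ (q ^ d) / y ^ (q ^ h) = 1"
          using W True by simp_all
        show ?thesis unfolding z_def hy mult_1_right by (rule l1)
      next
        case False
        then have b0: "\<beta> = 0" using c by simp
        have l2: "(\<alpha> * X = Y / (ad * Wd)) \<longleftrightarrow> X * (Wd / Y) = 1 / (\<alpha> * ad)" if "Wd \<noteq> 0" "Y \<noteq> 0" for X Y Wd :: 'a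
          using al ad that by (auto simp: field_simps)
        show ?thesis unfolding z_def b0 using l2[OF W] by simp
      qed
    qed
    have C2: "?C \<longleftrightarrow> (\<exists>x y. x \<noteq> 0 \<and> y \<noteq> 0 \<and> x ^ (q ^ k - 1) * (y ^ (q ^ d) / y ^ (q ^ h)) = z)"
      unfolding cond using eq by blast
    have epos: "e > 0" unfolding e_def using n0 by simp
    have edvd: "e dvd n" unfolding e_def by simp
    have ele: "e \<le> n" using edvd n0 by (rule dvd_imp_le)
    have Tpos: "(q ^ n - 1) div (q ^ e - 1) > 0"
    proof -
      have "q ^ e \<ge> q ^ 1" using q0 epos by (intro power_increasing) auto
      then have "q ^ e - 1 > 0" using q2 by simp
      moreover have "q ^ e \<le> q ^ n" using q0 ele by (intro power_increasing) auto
      ultimately show ?thesis by (simp add: div_greater_zero_iff)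
    qed
    show "?C \<longleftrightarrow> normq q n (nat (gcd (int n) (gcd (int k) (int d - int h)))) ((1 - \<beta> * ad) / (\<alpha> * ad)) = 1"
    proof (cases "z = 0")
      case True
      have "\<not> ?C" unfolding C2 True by auto
      moreover have "normq q n e z \<noteq> 1" unfolding normq_def True using Tpos by (metis zero_power zero_neq_one)
      ultimately show ?thesis unfolding ee z_def[symmetric] by simp
    next
      case False
      show ?thesis unfolding C2 ee z_def[symmetric] normq_def e_def
        by (rule part1_core[OF q2 card n0 False])
    qed
  next
    assume c: "d \<noteq> h \<and> \<beta> \<noteq> 0 \<and> 2 * (int k + \<bar>int d - int h\<bar>) \<le> int n"
    have ib: "int (2 * (k + nat \<bar>int d - int h\<bar>)) = 2 * (int k + \<bar>int d - int h\<bar>)" by simp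
    have "int (2 * (k + nat \<bar>int d - int h\<bar>)) \<le> int n" using c unfolding ib by linarith
    then have bnd: "2 * (k + nat \<bar>int d - int h\<bar>) \<le> n" by (simp only: of_nat_le_iff)
    show ?C unfolding cond using part2[OF q2 card k1 al _ ad _ bnd] c by blast
  qed
qed

end
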